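(* Let $A_1,B_1,B_2,C_1,C_2,C_3\in\mathbb{C}^{r\times r}$ with $C_j+mI$ invertible for all $m\ge0$, $A_1B_i=B_iA_1$ ($i=1,2$), $B_1B_2=B_2B_1$, and $C_iC_j=C_jC_i$ for $i,j\in\{1,2,3\}$. Let $n\ge1$ and suppose $A_1+mI$ is invertible for all $m\ge0$. Then $$F_4[A_1+nI]=F_4+x_1B_1\Big[\sum_{n_1=1}^nF_4[A_1+n_1I,B_1+I,C_1+I]\Big]C_1^{-1}+x_2B_2\Big[\sum_{n_1=1}^nF_4[A_1+n_1I,B_2+I,C_2+I]\Big]C_2^{-1}+x_3B_2\Big[\sum_{n_1=1}^nF_4[A_1+n_1I,B_2+I,C_3+I]\Big]C_3^{-1}.$$ Furthermore, if $A_1-n_1I$ is invertible for $0\le n_1\le n$, then $$F_4[A_1-nI]=F_4-x_1B_1\Big[\sum_{n_1=0}^{n-1}F_4[A_1-n_1I,B_1+I,C_1+I]\Big]C_1^{-1}-x_2B_2\Big[\sum_{n_1=0}^{n-1}F_4[A_1-n_1I,B_2+I,C_2+I]\Big]C_2^{-1}-x_3B_2\Big[\sum_{n_1=0}^{n-1}F_4[A_1-n_1I,B_2+I,C_3+I]\Big]C_3^{-1}.$$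
   Context: For $M\in\mathbb{C}^{r\times r}$: $(M)_0=I$, $(M)_m=M(M+I)\cdots(M+(m-1)I)$, $(M)^{-1}_m=((M)_m)^{-1}$. The three-variable Lauricella matrix function $$F_4=F_4[A_1,B_1,B_2;C_1,C_2,C_3;x_1,x_2,x_3]=\sum_{m_1,m_2,m_3\ge0}(A_1)_{m_1+m_2+m_3}(B_1)_{m_1}(B_2)_{m_2+m_3}(C_1)^{-1}_{m_1}(C_2)^{-1}_{m_2}(C_3)^{-1}_{m_3}\frac{x_1^{m_1}x_2^{m_2}x_3^{m_3}}{m_1!m_2!m_3!},$$ with scalar variables $x_1,x_2,x_3$ and matrix products in the written order; identities are of formal power series in the $x_i$. $F_4[\dots]$ lists only the shifted parameters, all others unchanged. *)

theory Defs
  imports "HOL-Analysis.Analysis"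
begin

type_synonym 'r cmat = "complex^'r^'r"

text \<open>Formal power series in three scalar variables x1,x2,x3 with matrix coefficients,
  represented by their coefficient arrays: S m1 m2 m3 is the coefficient of x1^m1 x2^m2 x3^m3.\<close>
type_synonym 'r mser = "nat \<Rightarrow> nat \<Rightarrow> nat \<Rightarrow> 'r cmat"

fun mpoch :: "('r::finite) cmat \<Rightarrow> nat \<Rightarrow> 'r cmat" where
  "mpoch M 0 = mat 1"
| "mpoch M (Suc m) = mpoch M m ** (M + mat (of_nat m))"

definition F4 :: "('r::finite) cmat \<Rightarrow> 'r cmat \<Rightarrow> 'r cmat \<Rightarrow> 'r cmat \<Rightarrow> 'r cmat \<Rightarrow> 'r cmat \<Rightarrow> 'r mser" where
  "F4 A1 B1 B2 C1 C2 C3 = (\<lambda>m1 m2 m3.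
     (1 / (fact m1 * fact m2 * fact m3)) *\<^sub>R
       (mpoch A1 (m1 + m2 + m3) ** mpoch B1 m1 ** mpoch B2 (m2 + m3)
        ** matrix_inv (mpoch C1 m1) ** matrix_inv (mpoch C2 m2) ** matrix_inv (mpoch C3 m3)))"

text \<open>Multiplication of a series by x1, x2, x3 respectively.\<close>
definition mulx1 :: "('r::finite) mser \<Rightarrow> 'r mser" where
  "mulx1 S = (\<lambda>m1 m2 m3. if m1 = 0 then 0 else S (m1 - 1) m2 m3)"
definition mulx2 :: "('r::finite) mser \<Rightarrow> 'r mser" where
  "mulx2 S = (\<lambda>m1 m2 m3. if m2 = 0 then 0 else S m1 (m2 - 1) m3)"
definition mulx3 :: "('r::finite) mser \<Rightarrow> 'r mser" where
  "mulx3 S = (\<lambda>m1 m2 m3. if m3 = 0 then 0 else S m1 m2 (m3 - 1))"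

definition sandwich :: "('r::finite) cmat \<Rightarrow> 'r mser \<Rightarrow> 'r cmat \<Rightarrow> 'r mser" where
  "sandwich M S N = (\<lambda>m1 m2 m3. M ** S m1 m2 m3 ** N)"

definition sadd :: "('r::finite) mser \<Rightarrow> 'r mser \<Rightarrow> 'r mser" where
  "sadd S T = (\<lambda>m1 m2 m3. S m1 m2 m3 + T m1 m2 m3)"
definition ssub :: "('r::finite) mser \<Rightarrow> 'r mser \<Rightarrow> 'r mser" where
  "ssub S T = (\<lambda>m1 m2 m3. S m1 m2 m3 - T m1 m2 m3)"
definition ssum :: "(nat \<Rightarrow> ('r::finite) mser) \<Rightarrow> nat set \<Rightarrow> 'r mser" where
  "ssum f I = (\<lambda>m1 m2 m3. \<Sum>k\<in>I. f k m1 m2 m3)"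

end

theory Submission
  imports Defs
begin


lemma mm_add_r: "((A::'a::semiring_1^'n^'m) + B) ** C = A ** C + B ** C"
  by (vector matrix_matrix_mult_def sum.distrib[symmetric] field_simps)
lemma mm_diff_r: "((A::'a::ring_1^'n^'m) - B) ** C = A ** C - B ** C"
  by (vector matrix_matrix_mult_def sum_subtractf[symmetric] field_simps)
lemma mm_diff_l: "(A::'a::ring_1^'n^'m) ** (B - C) = A ** B - A ** C"
  by (vector matrix_matrix_mult_def sum_subtractf[symmetric] field_simps)
lemma mat_add: "mat (a + b) = (mat a + mat b :: 'a::monoid_add^'n^'n)"
  by (vector mat_def)
lemma mat_diff: "mat (a - b) = (mat a - mat b :: 'a::ab_group_add^'n^'n)"
  by (vector mat_def)
lemma mat_mul_r: "(X::'a::comm_semiring_1^'n^'n) ** mat c = (mat c ** X)"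
  unfolding matrix_matrix_mult_def mat_def
  by (auto simp: vec_eq_iff if_distrib if_distribR sum.delta sum.delta' mult.commute cong: if_cong)
lemma mat_nat_scale: "(X::complex^'n^'n) ** mat (of_nat k) = real k *\<^sub>R X"
  unfolding matrix_matrix_mult_def mat_def
  by (auto simp: vec_eq_iff if_distrib if_distribR sum.delta' cong: if_cong) (simp add: scaleR_conv_of_real)

lemma inv_r: "invertible (A::'a::semiring_1^'n^'n) \<Longrightarrow> A ** matrix_inv A = mat 1"
  unfolding invertible_def matrix_inv_def by (rule someI_ex[THEN conjunct1])
lemma inv_l: "invertible (A::'a::semiring_1^'n^'n) \<Longrightarrow> matrix_inv A ** A = mat 1"
  unfolding invertible_def matrix_inv_def by (rule someI_ex[THEN conjunct2])
lemma inv_unique: "invertible (A::'a::semiring_1^'n^'n) \<Longrightarrow> B ** A = mat 1 \<Longrightarrow> matrix_inv A = B"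
proof -
  assume a: "invertible A" and b: "B ** A = mat 1"
  have "matrix_inv A = (B ** A) ** matrix_inv A" using b by simp
  also have "\<dots> = B ** (A ** matrix_inv A)" by (simp add: matrix_mul_assoc)
  also have "\<dots> = B" using inv_r[OF a] by simp
  finally show ?thesis .
qed
lemma inv_mult: "invertible (A::'a::semiring_1^'n^'n) \<Longrightarrow> invertible (B::'a^'n^'n) \<Longrightarrow>
   matrix_inv (A ** B) = matrix_inv B ** matrix_inv A"
proof -
  assume a: "invertible A" and b: "invertible B"
  have "(matrix_inv B ** matrix_inv A) ** (A ** B) = mat 1"
  proof -
    have "(matrix_inv B ** matrix_inv A) ** (A ** B) = matrix_inv B ** ((matrix_inv A ** A) ** B)"
      by (simp add: matrix_mul_assoc)
    also have "\<dots> = mat 1" using inv_l[OF a] inv_l[OF b] by simp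
    finally show ?thesis .
  qed
  then show ?thesis using inv_unique invertible_mult a b by blast
qed
lemma inv_comm: "invertible (A::'a::semiring_1^'n^'n) \<Longrightarrow> invertible (B::'a^'n^'n) \<Longrightarrow> A ** B = B ** A \<Longrightarrow>
   matrix_inv A ** matrix_inv B = matrix_inv B ** matrix_inv A"
  using inv_mult[of A B] inv_mult[of B A] by simp

lemma mat_comm: "(X::'a::comm_semiring_1^'n^'n) ** mat c = mat c ** X" by (rule mat_mul_r)

lemma comm_plus_mat: "(X::complex^'n^'n) ** M = M ** X \<Longrightarrow> X ** (M + mat c) = (M + mat c) ** X"
  by (simp add: matrix_add_ldistrib mm_add_r mat_mul_r)

lemma mpoch_comm: "(X::complex^'n^'n) ** M = M ** X \<Longrightarrow> X ** mpoch M k = mpoch M k ** X"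
proof (induction k)
  case 0 then show ?case by simp
next
  case (Suc k)
  have "X ** mpoch M (Suc k) = (X ** mpoch M k) ** (M + mat (of_nat k))"
    by (simp add: matrix_mul_assoc)
  also have "\<dots> = mpoch M k ** (X ** (M + mat (of_nat k)))"
    using Suc by (simp add: matrix_mul_assoc)
  also have "\<dots> = mpoch M k ** ((M + mat (of_nat k)) ** X)"
    using comm_plus_mat[OF Suc.prems] by simp
  finally show ?case by (simp add: matrix_mul_assoc)
qed

lemma mpoch_shift: "mpoch (M::complex^'n^'n) (Suc k) = M ** mpoch (M + mat 1) k"
proof (induction k)
  case 0 then show ?case by simp
next
  case (Suc k)
  have "mpoch M (Suc (Suc k)) = mpoch M (Suc k) ** (M + mat (of_nat (Suc k)))" by simp
  also have "\<dots> = M ** (mpoch (M + mat 1) k ** (M + mat 1 + mat (of_nat k)))"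
    using Suc by (simp add: matrix_mul_assoc mat_add add.assoc)
  finally show ?case by simp
qed

lemma mpoch_diff: "mpoch ((M::complex^'n^'n) + mat 1) (Suc j) - mpoch M (Suc j) = real (Suc j) *\<^sub>R mpoch (M + mat 1) j"
proof -
  have c: "M ** mpoch (M + mat 1) j = mpoch (M + mat 1) j ** M"
    by (rule mpoch_comm) (simp add: matrix_add_ldistrib mm_add_r mat_mul_r)
  have "mpoch (M + mat 1) (Suc j) - mpoch M (Suc j) = mpoch (M + mat 1) j ** (M + mat 1 + mat (of_nat j)) - mpoch (M + mat 1) j ** M"
    unfolding mpoch_shift[of M j] by (simp only: mpoch.simps(2) c)
  also have "\<dots> = mpoch (M + mat 1) j ** (M + mat 1 + mat (of_nat j) - M)"
    by (rule mm_diff_l[symmetric])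
  also have "M + mat 1 + mat (of_nat j) - M = mat (of_nat (Suc j))"
    by (simp add: mat_add)
  also have "mpoch (M+mat 1) j ** mat (of_nat (Suc j)) = real (Suc j) *\<^sub>R mpoch (M + mat 1) j"
    by (rule mat_nat_scale)
  finally show ?thesis .
qed

lemma mpoch_inv: "(\<And>m::nat. invertible ((M::complex^'n^'n) + mat (of_nat m))) \<Longrightarrow> invertible (mpoch M k)"
proof (induction k)
  case 0 then show ?case by (auto simp: invertible_def)
next
  case (Suc k) then show ?case by (simp add: invertible_mult)
qed

lemma inv_shift: "(\<And>m::nat. invertible ((M::complex^'n^'n) + mat (of_nat m))) \<Longrightarrow>
   matrix_inv (mpoch M (Suc j)) = matrix_inv (mpoch (M + mat 1) j) ** matrix_inv M"
proof -
  assume a: "\<And>m::nat. invertible (M + mat (of_nat m))"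
  have "invertible M" using a[of 0] by simp
  moreover have "invertible (mpoch (M + mat 1) j)"
  proof (rule mpoch_inv)
    fix m :: nat
    have "M + mat 1 + mat (of_nat m) = M + mat (of_nat (Suc m))" by (simp add: mat_add add.assoc)
    then show "invertible (M + mat 1 + mat (of_nat m))" using a[of "Suc m"] by (simp only:)
  qed
  ultimately show ?thesis unfolding mpoch_shift[of M j] by (rule inv_mult)
qed




lemma push: "(B::complex^'n^'n) ** Q = Q ** B \<Longrightarrow> B ** (Q ** X) = Q ** (B ** X)"
  by (simp only: matrix_mul_assoc)
lemma absorb: "(B::complex^'n^'n) ** Q = R \<Longrightarrow> B ** (Q ** X) = R ** X"
  by (simp only: matrix_mul_assoc)

lemma alg1:
  fixes B Q b1' b1 b2 i1' i1 i2 i3 iC :: "complex^'n^'n"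
  assumes "B ** Q = Q ** B" "B ** b1' = b1" "i3 ** iC = iC ** i3" "i2 ** iC = iC ** i2" "i1' ** iC = i1"
  shows "B ** (Q ** b1' ** b2 ** i1' ** i2 ** i3) ** iC = Q ** b1 ** b2 ** i1 ** i2 ** i3"
  by (simp only: matrix_mul_assoc[symmetric] push[OF assms(1)] absorb[OF assms(2)] assms(3)
        push[OF assms(4)] absorb[OF assms(5)])

lemma alg2:
  fixes B Q b1 b2' b2 i1 i2' i2 i3 iC :: "complex^'n^'n"
  assumes "B ** Q = Q ** B" "B ** b1 = b1 ** B" "B ** b2' = b2" "i3 ** iC = iC ** i3" "i2' ** iC = i2"
  shows "B ** (Q ** b1 ** b2' ** i1 ** i2' ** i3) ** iC = Q ** b1 ** b2 ** i1 ** i2 ** i3"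
  by (simp only: matrix_mul_assoc[symmetric] push[OF assms(1)] push[OF assms(2)] absorb[OF assms(3)]
        assms(4) absorb[OF assms(5)])

lemma alg3:
  fixes B Q b1 b2' b2 i1 i2 i3' i3 iC :: "complex^'n^'n"
  assumes "B ** Q = Q ** B" "B ** b1 = b1 ** B" "B ** b2' = b2" "i3' ** iC = i3"
  shows "B ** (Q ** b1 ** b2' ** i1 ** i2 ** i3') ** iC = Q ** b1 ** b2 ** i1 ** i2 ** i3"
  by (simp only: matrix_mul_assoc[symmetric] push[OF assms(1)] push[OF assms(2)] absorb[OF assms(3)]
        assms(4))

declare mpoch.simps(2)[simp del]

lemma step:
  fixes A B1 B2 C1 C2 C3 :: "('r::finite) cmat"
  assumes C1inv: "\<And>m::nat. invertible (C1 + mat (of_nat m))"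
      and C2inv: "\<And>m::nat. invertible (C2 + mat (of_nat m))"
      and C3inv: "\<And>m::nat. invertible (C3 + mat (of_nat m))"
      and AB1: "A ** B1 = B1 ** A" and AB2: "A ** B2 = B2 ** A"
      and BB: "B1 ** B2 = B2 ** B1"
      and CC12: "C1 ** C2 = C2 ** C1" and CC13: "C1 ** C3 = C3 ** C1"
      and CC23: "C2 ** C3 = C3 ** C2"
  shows "F4 (A + mat 1) B1 B2 C1 C2 C3 m1 m2 m3 = F4 A B1 B2 C1 C2 C3 m1 m2 m3
     + mulx1 (sandwich B1 (F4 (A + mat 1) (B1 + mat 1) B2 (C1 + mat 1) C2 C3) (matrix_inv C1)) m1 m2 m3
     + mulx2 (sandwich B2 (F4 (A + mat 1) B1 (B2 + mat 1) C1 (C2 + mat 1) C3) (matrix_inv C2)) m1 m2 m3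
     + mulx3 (sandwich B2 (F4 (A + mat 1) B1 (B2 + mat 1) C1 C2 (C3 + mat 1)) (matrix_inv C3)) m1 m2 m3"
proof -
  define c :: real where "c = 1 / (fact m1 * fact m2 * fact m3)"
  define k where "k = m1 + m2 + m3"
  define W :: "'r cmat \<Rightarrow> 'r cmat" where "W = (\<lambda>Q. Q ** mpoch B1 m1 ** mpoch B2 (m2+m3) ** matrix_inv (mpoch C1 m1)
       ** matrix_inv (mpoch C2 m2) ** matrix_inv (mpoch C3 m3))"
  define Q where "Q = mpoch (A + mat 1) (k - 1)"
  have Wsc: "W (r *\<^sub>R X) = r *\<^sub>R W X" for r X
    by (simp add: W_def scalar_matrix_assoc[symmetric])
  have Wdiff: "W (X - Y) = W X - W Y" for X Y
    by (simp add: W_def mm_diff_r)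
  have iC1: "invertible C1" using C1inv[of 0] by simp
  have iC2: "invertible C2" using C2inv[of 0] by simp
  have iC3: "invertible C3" using C3inv[of 0] by simp
  have iP2: "invertible (mpoch C2 m)" for m using mpoch_inv[OF C2inv] .
  have iP3: "invertible (mpoch C3 m)" for m using mpoch_inv[OF C3inv] .
  have cB1Q: "B1 ** Q = Q ** B1" unfolding Q_def
    by (rule mpoch_comm, rule comm_plus_mat, rule AB1[symmetric])
  have cB2Q: "B2 ** Q = Q ** B2" unfolding Q_def
    by (rule mpoch_comm, rule comm_plus_mat, rule AB2[symmetric])
  have cB2b1: "B2 ** mpoch B1 m1 = mpoch B1 m1 ** B2"
    by (rule mpoch_comm, rule BB[symmetric])
  have c31: "matrix_inv (mpoch C3 m3) ** matrix_inv C1 = matrix_inv C1 ** matrix_inv (mpoch C3 m3)"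
    by (rule inv_comm[OF iP3 iC1]) (rule mpoch_comm[OF CC13, symmetric])
  have c21: "matrix_inv (mpoch C2 m2) ** matrix_inv C1 = matrix_inv C1 ** matrix_inv (mpoch C2 m2)"
    by (rule inv_comm[OF iP2 iC1]) (rule mpoch_comm[OF CC12, symmetric])
  have c32: "matrix_inv (mpoch C3 m3) ** matrix_inv C2 = matrix_inv C2 ** matrix_inv (mpoch C3 m3)"
    by (rule inv_comm[OF iP3 iC2]) (rule mpoch_comm[OF CC23, symmetric])
  have X1: "mulx1 (sandwich B1 (F4 (A + mat 1) (B1 + mat 1) B2 (C1 + mat 1) C2 C3) (matrix_inv C1)) m1 m2 m3
      = (c * real m1) *\<^sub>R W Q"
  proof (cases m1)
    case 0 thus ?thesis by (simp add: mulx1_def)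
  next
    case (Suc j)
    have kk: "k - 1 = j + m2 + m3" using Suc k_def by simp
    have al: "B1 ** (mpoch (A + mat 1) (j+m2+m3) ** mpoch (B1 + mat 1) j ** mpoch B2 (m2+m3)
        ** matrix_inv (mpoch (C1 + mat 1) j) ** matrix_inv (mpoch C2 m2) ** matrix_inv (mpoch C3 m3))
        ** matrix_inv C1 = W Q"
      unfolding W_def Q_def kk Suc
      by (rule alg1[OF cB1Q[unfolded Q_def kk] mpoch_shift[symmetric] c31 c21 inv_shift[OF C1inv, symmetric]])
    have "mulx1 (sandwich B1 (F4 (A + mat 1) (B1 + mat 1) B2 (C1 + mat 1) C2 C3) (matrix_inv C1)) m1 m2 m3
       = B1 ** F4 (A + mat 1) (B1 + mat 1) B2 (C1 + mat 1) C2 C3 j m2 m3 ** matrix_inv C1"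
      by (simp add: mulx1_def sandwich_def Suc)
    also have "\<dots> = (1 / (fact j * fact m2 * fact m3)) *\<^sub>R (B1 ** (mpoch (A + mat 1) (j+m2+m3) ** mpoch (B1 + mat 1) j ** mpoch B2 (m2+m3)
        ** matrix_inv (mpoch (C1 + mat 1) j) ** matrix_inv (mpoch C2 m2) ** matrix_inv (mpoch C3 m3))
        ** matrix_inv C1)"
      by (simp add: F4_def matrix_scalar_ac scalar_matrix_assoc[symmetric])
    also have "1 / (fact j * fact m2 * fact m3) = c * real m1"
    proof -
      have f: "(fact (Suc j) :: real) = real (Suc j) * fact j" by simp
      show ?thesis unfolding c_def Suc f by (simp add: field_simps del: of_nat_Suc)
    qed
    finally show ?thesis using al by simp
  qed
  have X2: "mulx2 (sandwich B2 (F4 (A + mat 1) B1 (B2 + mat 1) C1 (C2 + mat 1) C3) (matrix_inv C2)) m1 m2 m3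
      = (c * real m2) *\<^sub>R W Q"
  proof (cases m2)
    case 0 thus ?thesis by (simp add: mulx2_def)
  next
    case (Suc j)
    have kk: "k - 1 = m1 + j + m3" using Suc k_def by simp
    have al: "B2 ** (mpoch (A + mat 1) (m1+j+m3) ** mpoch B1 m1 ** mpoch (B2 + mat 1) (j + m3)
        ** matrix_inv (mpoch C1 m1) ** matrix_inv (mpoch (C2 + mat 1) j) ** matrix_inv (mpoch C3 m3))
        ** matrix_inv C2 = W Q"
      unfolding W_def Q_def kk Suc
      by (rule alg2[OF cB2Q[unfolded Q_def kk] cB2b1 _ c32 inv_shift[OF C2inv, symmetric]])
         (simp add: mpoch_shift)
    have "mulx2 (sandwich B2 (F4 (A + mat 1) B1 (B2 + mat 1) C1 (C2 + mat 1) C3) (matrix_inv C2)) m1 m2 m3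
       = B2 ** F4 (A + mat 1) B1 (B2 + mat 1) C1 (C2 + mat 1) C3 m1 j m3 ** matrix_inv C2"
      by (simp add: mulx2_def sandwich_def Suc)
    also have "\<dots> = (1 / (fact m1 * fact j * fact m3)) *\<^sub>R (B2 ** (mpoch (A + mat 1) (m1+j+m3) ** mpoch B1 m1 ** mpoch (B2 + mat 1) (j + m3)
        ** matrix_inv (mpoch C1 m1) ** matrix_inv (mpoch (C2 + mat 1) j) ** matrix_inv (mpoch C3 m3))
        ** matrix_inv C2)"
      by (simp add: F4_def matrix_scalar_ac scalar_matrix_assoc[symmetric])
    also have "1 / (fact m1 * fact j * fact m3) = c * real m2"
    proof -
      have f: "(fact (Suc j) :: real) = real (Suc j) * fact j" by simp
      show ?thesis unfolding c_def Suc f by (simp add: field_simps del: of_nat_Suc)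
    qed
    finally show ?thesis using al by simp
  qed
  have X3: "mulx3 (sandwich B2 (F4 (A + mat 1) B1 (B2 + mat 1) C1 C2 (C3 + mat 1)) (matrix_inv C3)) m1 m2 m3
      = (c * real m3) *\<^sub>R W Q"
  proof (cases m3)
    case 0 thus ?thesis by (simp add: mulx3_def)
  next
    case (Suc j)
    have kk: "k - 1 = m1 + m2 + j" using Suc k_def by simp
    have al: "B2 ** (mpoch (A + mat 1) (m1+m2+j) ** mpoch B1 m1 ** mpoch (B2 + mat 1) (m2 + j)
        ** matrix_inv (mpoch C1 m1) ** matrix_inv (mpoch C2 m2) ** matrix_inv (mpoch (C3 + mat 1) j))
        ** matrix_inv C3 = W Q"
      unfolding W_def Q_def kk Suc
      by (rule alg3[OF cB2Q[unfolded Q_def kk] cB2b1 _ inv_shift[OF C3inv, symmetric]])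
         (simp add: mpoch_shift)
    have "mulx3 (sandwich B2 (F4 (A + mat 1) B1 (B2 + mat 1) C1 C2 (C3 + mat 1)) (matrix_inv C3)) m1 m2 m3
       = B2 ** F4 (A + mat 1) B1 (B2 + mat 1) C1 C2 (C3 + mat 1) m1 m2 j ** matrix_inv C3"
      by (simp add: mulx3_def sandwich_def Suc)
    also have "\<dots> = (1 / (fact m1 * fact m2 * fact j)) *\<^sub>R (B2 ** (mpoch (A + mat 1) (m1+m2+j) ** mpoch B1 m1 ** mpoch (B2 + mat 1) (m2 + j)
        ** matrix_inv (mpoch C1 m1) ** matrix_inv (mpoch C2 m2) ** matrix_inv (mpoch (C3 + mat 1) j))
        ** matrix_inv C3)"
      by (simp add: F4_def matrix_scalar_ac scalar_matrix_assoc[symmetric])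
    also have "1 / (fact m1 * fact m2 * fact j) = c * real m3"
    proof -
      have f: "(fact (Suc j) :: real) = real (Suc j) * fact j" by simp
      show ?thesis unfolding c_def Suc f by (simp add: field_simps del: of_nat_Suc)
    qed
    finally show ?thesis using al by simp
  qed
  have F4W: "F4 M B1 B2 C1 C2 C3 m1 m2 m3 = c *\<^sub>R W (mpoch M k)" for M
    by (simp add: F4_def c_def W_def k_def)
  have D: "F4 (A + mat 1) B1 B2 C1 C2 C3 m1 m2 m3 - F4 A B1 B2 C1 C2 C3 m1 m2 m3 = (c * real k) *\<^sub>R W Q"
  proof (cases k)
    case 0 thus ?thesis by (simp add: F4W)
  next
    case (Suc k')
    have "F4 (A + mat 1) B1 B2 C1 C2 C3 m1 m2 m3 - F4 A B1 B2 C1 C2 C3 m1 m2 m3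
       = c *\<^sub>R W (mpoch (A + mat 1) (Suc k') - mpoch A (Suc k'))"
      by (simp add: F4W Suc Wdiff scaleR_diff_right)
    also have "\<dots> = (c * real k) *\<^sub>R W Q"
      unfolding mpoch_diff Wsc Q_def Suc by simp
    finally show ?thesis .
  qed
  have "real k = real m1 + real m2 + real m3" by (simp add: k_def)
  then have "(c * real k) *\<^sub>R W Q = (c * real m1) *\<^sub>R W Q + (c * real m2) *\<^sub>R W Q + (c * real m3) *\<^sub>R W Q"
    by (simp add: distrib_left scaleR_left_distrib)
  then show ?thesis using D X1 X2 X3 by (simp add: algebra_simps)
qed

lemma mm_sum_l: "finite I \<Longrightarrow> (M::'a::semiring_1^'n^'m) ** sum g I = (\<Sum>i\<in>I. M ** g i)"
  by (induction I rule: finite_induct) (simp_all add: matrix_add_ldistrib)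
lemma mm_sum_r: "finite I \<Longrightarrow> sum g I ** (N::'a::semiring_1^'n^'m) = (\<Sum>i\<in>I. g i ** N)"
  by (induction I rule: finite_induct) (simp_all add: mm_add_r)

lemma lin1: "finite I \<Longrightarrow> mulx1 (sandwich M (ssum f I) N) m1 m2 m3 = (\<Sum>i\<in>I. mulx1 (sandwich M (f i) N) m1 m2 m3)"
  by (simp add: mulx1_def sandwich_def ssum_def mm_sum_l mm_sum_r)
lemma lin2: "finite I \<Longrightarrow> mulx2 (sandwich M (ssum f I) N) m1 m2 m3 = (\<Sum>i\<in>I. mulx2 (sandwich M (f i) N) m1 m2 m3)"
  by (simp add: mulx2_def sandwich_def ssum_def mm_sum_l mm_sum_r)
lemma lin3: "finite I \<Longrightarrow> mulx3 (sandwich M (ssum f I) N) m1 m2 m3 = (\<Sum>i\<in>I. mulx3 (sandwich M (f i) N) m1 m2 m3)"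
  by (simp add: mulx3_def sandwich_def ssum_def mm_sum_l mm_sum_r)

lemma comm_minus_mat: "(X::complex^'n^'n) ** M = M ** X \<Longrightarrow> X ** (M - mat c) = (M - mat c) ** X"
  by (simp add: mm_diff_l mm_diff_r mat_mul_r)

theorem mainTheorem16:
  fixes A1 B1 B2 C1 C2 C3 :: "('r::finite) cmat" and n :: nat
  assumes C1inv: "\<And>m::nat. invertible (C1 + mat (of_nat m))"
      and C2inv: "\<And>m::nat. invertible (C2 + mat (of_nat m))"
      and C3inv: "\<And>m::nat. invertible (C3 + mat (of_nat m))"
      and AB1: "A1 ** B1 = B1 ** A1" and AB2: "A1 ** B2 = B2 ** A1"
      and BB: "B1 ** B2 = B2 ** B1"
      and CC12: "C1 ** C2 = C2 ** C1" and CC13: "C1 ** C3 = C3 ** C1"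
      and CC23: "C2 ** C3 = C3 ** C2"
      and n: "n \<ge> 1"
      and Ainv: "\<And>m::nat. invertible (A1 + mat (of_nat m))"
  shows "F4 (A1 + mat (of_nat n)) B1 B2 C1 C2 C3 =
           sadd (sadd (sadd (F4 A1 B1 B2 C1 C2 C3)
             (mulx1 (sandwich B1 (ssum (\<lambda>n1. F4 (A1 + mat (of_nat n1)) (B1 + mat 1) B2 (C1 + mat 1) C2 C3) {1..n}) (matrix_inv C1))))
             (mulx2 (sandwich B2 (ssum (\<lambda>n1. F4 (A1 + mat (of_nat n1)) B1 (B2 + mat 1) C1 (C2 + mat 1) C3) {1..n}) (matrix_inv C2))))
             (mulx3 (sandwich B2 (ssum (\<lambda>n1. F4 (A1 + mat (of_nat n1)) B1 (B2 + mat 1) C1 C2 (C3 + mat 1)) {1..n}) (matrix_inv C3)))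
         \<and> ((\<forall>n1\<le>n. invertible (A1 - mat (of_nat n1))) \<longrightarrow>
           F4 (A1 - mat (of_nat n)) B1 B2 C1 C2 C3 =
           ssub (ssub (ssub (F4 A1 B1 B2 C1 C2 C3)
             (mulx1 (sandwich B1 (ssum (\<lambda>n1. F4 (A1 - mat (of_nat n1)) (B1 + mat 1) B2 (C1 + mat 1) C2 C3) {0..n-1}) (matrix_inv C1))))
             (mulx2 (sandwich B2 (ssum (\<lambda>n1. F4 (A1 - mat (of_nat n1)) B1 (B2 + mat 1) C1 (C2 + mat 1) C3) {0..n-1}) (matrix_inv C2))))
             (mulx3 (sandwich B2 (ssum (\<lambda>n1. F4 (A1 - mat (of_nat n1)) B1 (B2 + mat 1) C1 C2 (C3 + mat 1)) {0..n-1}) (matrix_inv C3))))"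
proof -
  define X where "X = (\<lambda>A m1 m2 m3.
       mulx1 (sandwich B1 (F4 A (B1 + mat 1) B2 (C1 + mat 1) C2 C3) (matrix_inv C1)) m1 m2 m3
     + mulx2 (sandwich B2 (F4 A B1 (B2 + mat 1) C1 (C2 + mat 1) C3) (matrix_inv C2)) m1 m2 m3
     + mulx3 (sandwich B2 (F4 A B1 (B2 + mat 1) C1 C2 (C3 + mat 1)) (matrix_inv C3)) m1 m2 m3)"
  have stp: "M ** B1 = B1 ** M \<Longrightarrow> M ** B2 = B2 ** M \<Longrightarrow>
      F4 (M + mat 1) B1 B2 C1 C2 C3 m1 m2 m3 = F4 M B1 B2 C1 C2 C3 m1 m2 m3 + X (M + mat 1) m1 m2 m3"
    for M m1 m2 m3
    unfolding X_def using step[OF C1inv C2inv C3inv _ _ BB CC12 CC13 CC23, of M m1 m2 m3]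
    by (simp add: add.assoc)
  have cp1: "(A1 + mat c) ** B1 = B1 ** (A1 + mat c)" for c
    using comm_plus_mat[OF AB1[symmetric]] by simp
  have cp2: "(A1 + mat c) ** B2 = B2 ** (A1 + mat c)" for c
    using comm_plus_mat[OF AB2[symmetric]] by simp
  have cm1: "(A1 - mat c) ** B1 = B1 ** (A1 - mat c)" for c
    using comm_minus_mat[OF AB1[symmetric]] by simp
  have cm2: "(A1 - mat c) ** B2 = B2 ** (A1 - mat c)" for c
    using comm_minus_mat[OF AB2[symmetric]] by simp
  have P: "F4 (A1 + mat (of_nat N)) B1 B2 C1 C2 C3 m1 m2 m3 =
      F4 A1 B1 B2 C1 C2 C3 m1 m2 m3 + (\<Sum>n1\<in>{1..N}. X (A1 + mat (of_nat n1)) m1 m2 m3)" for N m1 m2 m3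
  proof (induction N)
    case 0 then show ?case by simp
  next
    case (Suc N)
    have e: "A1 + mat (of_nat N) + mat 1 = A1 + mat (of_nat (Suc N))"
      by (simp add: mat_add algebra_simps)
    show ?case using stp[OF cp1 cp2, of "of_nat N" m1 m2 m3] Suc
      by (simp add: e sum.cl_ivl_Suc)
  qed
  have Mi: "F4 (A1 - mat (of_nat N)) B1 B2 C1 C2 C3 m1 m2 m3 =
      F4 A1 B1 B2 C1 C2 C3 m1 m2 m3 - (\<Sum>n1\<in>{0..<N}. X (A1 - mat (of_nat n1)) m1 m2 m3)" for N m1 m2 m3
  proof (induction N)
    case 0 then show ?case by simp
  next
    case (Suc N)
    have e: "A1 - mat (of_nat (Suc N)) + mat 1 = A1 - mat (of_nat N)"
      by (simp add: mat_add algebra_simps)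
    have s: "F4 (A1 - mat (of_nat N)) B1 B2 C1 C2 C3 m1 m2 m3 = F4 (A1 - mat (of_nat (Suc N))) B1 B2 C1 C2 C3 m1 m2 m3
       + X (A1 - mat (of_nat N)) m1 m2 m3"
      using stp[OF cm1 cm2, of "of_nat (Suc N)" m1 m2 m3] unfolding e .
    show ?case using s Suc.IH by (simp add: sum.atLeast0_lessThan_Suc algebra_simps)
  qed
  have iv: "{0..n-1} = {0..<n}" using n by auto
  show ?thesis
  proof (intro conjI impI)
    show "F4 (A1 + mat (of_nat n)) B1 B2 C1 C2 C3 = sadd (sadd (sadd (F4 A1 B1 B2 C1 C2 C3)
             (mulx1 (sandwich B1 (ssum (\<lambda>n1. F4 (A1 + mat (of_nat n1)) (B1 + mat 1) B2 (C1 + mat 1) C2 C3) {1..n}) (matrix_inv C1))))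
             (mulx2 (sandwich B2 (ssum (\<lambda>n1. F4 (A1 + mat (of_nat n1)) B1 (B2 + mat 1) C1 (C2 + mat 1) C3) {1..n}) (matrix_inv C2))))
             (mulx3 (sandwich B2 (ssum (\<lambda>n1. F4 (A1 + mat (of_nat n1)) B1 (B2 + mat 1) C1 C2 (C3 + mat 1)) {1..n}) (matrix_inv C3)))"
      by (intro ext) (simp add: sadd_def lin1 lin2 lin3 P X_def sum.distrib add.assoc)
    show "F4 (A1 - mat (of_nat n)) B1 B2 C1 C2 C3 =
           ssub (ssub (ssub (F4 A1 B1 B2 C1 C2 C3)
             (mulx1 (sandwich B1 (ssum (\<lambda>n1. F4 (A1 - mat (of_nat n1)) (B1 + mat 1) B2 (C1 + mat 1) C2 C3) {0..n-1}) (matrix_inv C1))))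
             (mulx2 (sandwich B2 (ssum (\<lambda>n1. F4 (A1 - mat (of_nat n1)) B1 (B2 + mat 1) C1 (C2 + mat 1) C3) {0..n-1}) (matrix_inv C2))))
             (mulx3 (sandwich B2 (ssum (\<lambda>n1. F4 (A1 - mat (of_nat n1)) B1 (B2 + mat 1) C1 C2 (C3 + mat 1)) {0..n-1}) (matrix_inv C3)))"
      unfolding iv
      by (intro ext) (simp add: ssub_def lin1 lin2 lin3 Mi X_def sum.distrib diff_diff_eq add.assoc)
  qed
qed


end
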